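(* Consider Algorithm NCB run with inputs $k\ge2$ and $T$ on an instance with $\mu^*\ge\frac{32\sqrt{k\log k\log T}}{\sqrt T}$, and let $i^*$ be an arm with $\mu_{i^*}=\mu^*$. On the event $G$, for every round $t>\widetilde T$ (i.e. every round of Phase II), the Nash confidence bound of $i^*$ at round $t$ satisfies $\mathrm{NCB}_{i^*,t}\ge\mu^*$.
   Context: Bandit setup: $k$ arms, arm $i$ a distribution on $[0,1]$ with mean $\mu_i$, $\mu^*:=\max_i\mu_i$. $\log$ is the natural logarithm. Canonical model: a $k\times T$ table $(Y_{i,s})$ of independent entries with $Y_{i,s}$ distributed as arm $i$; the $s$-th pull of arm $i$ yields $Y_{i,s}$. Let $\widehat\mu_{i,s}:=\frac1s\sum_{r=1}^sY_{i,r}$. Algorithm NCB (inputs $k,T$): $\widetilde T:=16\sqrt{\frac{kT\log T}{\log k}}$. Phase I: in each round $t\le\widetilde T$ pull a uniformly random arm. Phase II: in each round $\widetilde T<t\le T$ pull an arm maximizing $\mathrm{NCB}_i:=\widehat\mu_i+4\sqrt{\widehat\mu_i\log T/n_i}$, where $n_i$ is the number of pulls of $i$ before the round and $\widehat\mu_i$ its empirical mean (ties arbitrary); $\mathrm{NCB}_{i,t}$ denotes this value at round $t$. Events: $G_1$: every arm is pulled at least $\frac{\widetilde T}{2k}$ times in Phase I. $G_2$: for every arm $i$ with $\mu_i>\frac{6\sqrt{k\log k\log T}}{\sqrt T}$ and every integer $s$ with $\frac{\widetilde T}{2k}\le s\le T$, $|\mu_i-\widehat\mu_{i,s}|\le 3\sqrt{\frac{\mu_i\log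 T}{s}}$. $G_3$: for every arm $j$ with $\mu_j\le\frac{6\sqrt{k\log k\log T}}{\sqrt T}$ and every integer $s$ with $\frac{\widetilde T}{2k}\le s\le T$, $\widehat\mu_{j,s}\le \frac{9\sqrt{k\log k\log T}}{\sqrt T}$. $G:=G_1\cap G_2\cap G_3$. *)

theory Defs
  imports Complex_Main
begin

text \<open>Deterministic rendering of one outcome of the canonical model.
  Arms are 0..<k, rounds are 1..T.  Y i s is the s-th reward of arm i (s = 1..T),
  a t is the arm pulled in round t.\<close>

definition Ttil :: "nat \<Rightarrow> nat \<Rightarrow> real" where
  "Ttil k T = 16 * sqrt (real k * real T * ln (real T) / ln (real k))"

definition npulls :: "(nat \<Rightarrow> nat) \<Rightarrow> nat \<Rightarrow> nat \<Rightarrow> nat" where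
  "npulls a i t = card {r \<in> {1..<t}. a r = i}"

definition muhat :: "(nat \<Rightarrow> nat \<Rightarrow> real) \<Rightarrow> nat \<Rightarrow> nat \<Rightarrow> real" where
  "muhat Y i s = (\<Sum>r = 1..s. Y i r) / real s"

definition NCB :: "nat \<Rightarrow> (nat \<Rightarrow> nat \<Rightarrow> real) \<Rightarrow> (nat \<Rightarrow> nat) \<Rightarrow> nat \<Rightarrow> nat \<Rightarrow> real" where
  "NCB T Y a i t =
     (let n = npulls a i t; m = muhat Y i n in m + 4 * sqrt (m * ln (real T) / real n))"

text \<open>a is a possible run of NCB: in Phase I arbitrary arms (any realisation of the
  uniform choices), in Phase II an NCB-maximising arm (ties arbitrary).\<close>
definition ncb_run :: "nat \<Rightarrow> nat \<Rightarrow> (nat \<Rightarrow> nat \<Rightarrow> real) \<Rightarrow> (nat \<Rightarrow> nat) \<Rightarrow> bool" where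
  "ncb_run k T Y a \<longleftrightarrow>
     (\<forall>t \<in> {1..T}. a t < k) \<and>
     (\<forall>t \<in> {1..T}. Ttil k T < real t \<longrightarrow> (\<forall>j<k. NCB T Y a j t \<le> NCB T Y a (a t) t))"

definition thr :: "nat \<Rightarrow> nat \<Rightarrow> real" where
  "thr k T = sqrt (real k * ln (real k) * ln (real T)) / sqrt (real T)"

definition G1 :: "nat \<Rightarrow> nat \<Rightarrow> (nat \<Rightarrow> nat) \<Rightarrow> bool" where
  "G1 k T a \<longleftrightarrow>
     (\<forall>i<k. real (card {t \<in> {1..T}. real t \<le> Ttil k T \<and> a t = i}) \<ge> Ttil k T / (2 * real k))"

definition G2 :: "nat \<Rightarrow> nat \<Rightarrow> (nat \<Rightarrow> real) \<Rightarrow> (nat \<Rightarrow> nat \<Rightarrow> real) \<Rightarrow> bool" where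
  "G2 k T \<mu> Y \<longleftrightarrow>
     (\<forall>i<k. \<mu> i > 6 * thr k T \<longrightarrow>
        (\<forall>s::nat. Ttil k T / (2 * real k) \<le> real s \<and> s \<le> T \<longrightarrow>
           \<bar>\<mu> i - muhat Y i s\<bar> \<le> 3 * sqrt (\<mu> i * ln (real T) / real s)))"

definition G3 :: "nat \<Rightarrow> nat \<Rightarrow> (nat \<Rightarrow> real) \<Rightarrow> (nat \<Rightarrow> nat \<Rightarrow> real) \<Rightarrow> bool" where
  "G3 k T \<mu> Y \<longleftrightarrow>
     (\<forall>j<k. \<mu> j \<le> 6 * thr k T \<longrightarrow>
        (\<forall>s::nat. Ttil k T / (2 * real k) \<le> real s \<and> s \<le> T \<longrightarrow>
           muhat Y j s \<le> 9 * thr k T))"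

definition G :: "nat \<Rightarrow> nat \<Rightarrow> (nat \<Rightarrow> real) \<Rightarrow> (nat \<Rightarrow> nat \<Rightarrow> real) \<Rightarrow> (nat \<Rightarrow> nat) \<Rightarrow> bool" where
  "G k T \<mu> Y a \<longleftrightarrow> G1 k T a \<and> G2 k T \<mu> Y \<and> G3 k T \<mu> Y"

end

theory Submission
  imports Defs
begin

lemma key_ineq:
  fixes \<mu> h q :: real
  assumes "\<mu> \<ge> 0" "q \<ge> 0" "q \<le> \<mu> / 256" "\<bar>\<mu> - h\<bar> \<le> 3 * sqrt (\<mu> * q)"
  shows "h + 4 * sqrt (h * q) \<ge> \<mu>"
proof -
  have "\<mu> * q \<le> (\<mu>/16)^2" 
  proof -
    have "\<mu> * q \<le> \<mu> * (\<mu>/256)" by (rule mult_left_mono[OF assms(3) assms(1)])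
    thus ?thesis by (simp add: power2_eq_square)
  qed
  hence "sqrt (\<mu> * q) \<le> sqrt ((\<mu>/16)^2)" by (rule real_sqrt_le_mono)
  hence s1: "sqrt (\<mu> * q) \<le> \<mu>/16" using assms(1) by simp
  hence hge: "h \<ge> 13/16 * \<mu>" using assms(4) by linarith
  have "(9/16) * (\<mu> * q) \<le> h * q" 
  proof -
    have "(9/16 * \<mu>) * q \<le> h * q" using hge assms(1) by (intro mult_right_mono[OF _ assms(2)]) linarith
    thus ?thesis by simp
  qed
  hence "sqrt ((9/16) * (\<mu> * q)) \<le> sqrt (h * q)" by simp
  moreover have "sqrt ((9/16) * (\<mu> * q)) = 3/4 * sqrt (\<mu> * q)"
    by (simp add: real_sqrt_mult real_sqrt_divide)
  ultimately show ?thesis using assms(4) by linarith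
qed

theorem lemma2:
  fixes k T :: nat and \<mu> :: "nat \<Rightarrow> real" and Y :: "nat \<Rightarrow> nat \<Rightarrow> real"
    and a :: "nat \<Rightarrow> nat" and istar t :: nat
  assumes "k \<ge> 2"
    and "\<forall>i<k. 0 \<le> \<mu> i \<and> \<mu> i \<le> 1"
    and "\<forall>i<k. \<forall>s\<in>{1..T}. 0 \<le> Y i s \<and> Y i s \<le> 1"
    and "Max (\<mu> ` {..<k}) \<ge> 32 * thr k T"
    and "istar < k" and "\<mu> istar = Max (\<mu> ` {..<k})"
    and "ncb_run k T Y a"
    and "G k T \<mu> Y a"
    and "Ttil k T < real t" and "t \<le> T"
  shows "NCB T Y a istar t \<ge> Max (\<mu> ` {..<k})"
proof -
  define n where "n = npulls a istar t"
  define L where "L = ln (real T)"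
  define m where "m = Ttil k T / (2 * real k)"
  have muge: "\<mu> istar \<ge> 0" using assms(2,5) by auto
  have lnT: "ln (real T) \<ge> 0" by (cases "T = 0") auto
  have thr0: "thr k T \<ge> 0" unfolding thr_def
    using assms(1) lnT by (auto intro!: divide_nonneg_nonneg mult_nonneg_nonneg)
  have nle: "n \<le> T"
  proof -
    have "n \<le> card {1..<t}" unfolding n_def npulls_def by (rule card_mono) auto
    thus ?thesis using assms(10) by simp
  qed
  have nge: "real n \<ge> m"
  proof -
    have "card {t' \<in> {1..T}. real t' \<le> Ttil k T \<and> a t' = istar} \<le> n"
      unfolding n_def npulls_def using assms(9) by (intro card_mono) auto
    moreover have "real (card {t' \<in> {1..T}. real t' \<le> Ttil k T \<and> a t' = istar}) \<ge> m"
      using assms(8,5) unfolding G_def G1_def m_def by auto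
    ultimately show ?thesis by linarith
  qed
  have hnn: "muhat Y istar n \<ge> 0"
    unfolding muhat_def using assms(3,5) nle
    by (intro divide_nonneg_nonneg sum_nonneg) auto
  have NCBeq: "NCB T Y a istar t = muhat Y istar n + 4 * sqrt (muhat Y istar n * L / real n)"
    unfolding NCB_def n_def L_def Let_def by simp
  have L0: "L \<ge> 0" unfolding L_def using assms(10) by (cases "T = 0") auto
  show ?thesis
  proof (cases "\<mu> istar > 6 * thr k T")
    case False
    hence "Max (\<mu> ` {..<k}) = 0" using assms(4,6) thr0 muge by linarith
    thus ?thesis using NCBeq hnn L0 by simp
  next
    case True
    have G2: "\<bar>\<mu> istar - muhat Y istar n\<bar> \<le> 3 * sqrt (\<mu> istar * ln (real T) / real n)"
      using assms(8,5) True nge nle unfolding G_def G2_def m_def by auto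
    have qb: "L / real n \<le> \<mu> istar / 256"
    proof (cases "L = 0")
      case True thus ?thesis using muge by simp
    next
      case False
      hence Tpos: "T \<ge> 2" unfolding L_def by (cases "T = 0"; cases "T = 1") auto
      hence Lpos: "L > 0" using L0 False by linarith
      have lk: "ln (real k) > 0" using assms(1) by simp
      have kp: "real k > 0" using assms(1) by simp
      have prodeq: "m * thr k T = 8 * L"
      proof -
        have "m * thr k T = 8 * (sqrt (real k * real T * L / ln (real k)) * sqrt (real k * ln (real k) * L)) / (real k * sqrt (real T))"
          unfolding m_def Ttil_def thr_def L_def by (simp add: field_simps)
        also have "sqrt (real k * real T * L / ln (real k)) * sqrt (real k * ln (real k) * L)
             = sqrt ((real k * L)^2 * real T)"
          unfolding real_sqrt_mult[symmetric] using lk by (simp add: field_simps power2_eq_square)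
        also have "\<dots> = real k * L * sqrt (real T)" using kp Lpos by (simp add: real_sqrt_mult)
        finally show ?thesis using kp Tpos by simp
      qed
      have mpos: "m > 0"
        unfolding m_def Ttil_def using kp lk Tpos Lpos L_def by (auto intro!: divide_pos_pos mult_pos_pos)
      have "L / real n \<le> L / m" using nge mpos L0 by (intro divide_left_mono) auto
      also have "L / m = thr k T / 8" using prodeq mpos by (simp add: field_simps)
      also have "\<dots> \<le> \<mu> istar / 256" using assms(4,6) by simp
      finally show ?thesis .
    qed
    have "muhat Y istar n + 4 * sqrt (muhat Y istar n * (L / real n)) \<ge> \<mu> istar"
      by (rule key_ineq[OF muge _ qb]) (use L0 G2 in \<open>auto simp: L_def\<close>)
    thus ?thesis using NCBeq assms(6) by simp
  qed
qed

end
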